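(* Let $m\ge 1$ be an integer and let $(h(n))_{n\ge 1}$ be the non-decreasing sequence of non-negative integers with $h(1)=0$ in which, for each integer $k\ge 0$, the value $k$ appears exactly $mk+1$ times. For $k\ge 0$ let $T^{\star}_k = 1 + m\binom{k}{2} + k$ (so $h(n)=k$ if and only if $T^{\star}_k\le n<T^{\star}_{k+1}$), and let $a_{\mathrm{sol}}(n) = n - h(n)$ for $n\ge1$. Then: (1) For every $k\ge 0$: $h\big(a_{\mathrm{sol}}^{(j)}(T^{\star}_{k+1}-1)\big) = k$ for all $0\le j\le m$, and $a_{\mathrm{sol}}^{(m)}(T^{\star}_{k+1}-1) = T^{\star}_k$. (2) For every $k\ge 1$: $h\big(a_{\mathrm{sol}}^{(j)}(T^{\star}_{k})\big) = k-1$ for all $1\le j\le m$, and $a_{\mathrm{sol}}^{(m)}(T^{\star}_{k}) = T^{\star}_{k-1}$.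
   Context: Iterates are defined by $f^{(0)}(n)=n$ and $f^{(j+1)}(n)=f(f^{(j)}(n))$. *)

theory Defs
  imports Main
begin

definition Tstar :: "nat \<Rightarrow> nat \<Rightarrow> nat" where
  "Tstar m k = 1 + m * (k choose 2) + k"

end

theory Submission
  imports Defs
begin

lemma Tstar_Suc: "Tstar m (Suc k) = Tstar m k + m * k + 1"
  by (simp add: Tstar_def numeral_2_eq_2 algebra_simps)

theorem mainTheorem3:
  fixes m :: nat and h :: "nat \<Rightarrow> nat"
  assumes m: "m \<ge> 1"
    and h1: "h 1 = 0"
    and hmono: "\<And>n. n \<ge> 1 \<Longrightarrow> h n \<le> h (Suc n)"
    and hcount: "\<And>k. card {n. n \<ge> 1 \<and> h n = k} = m * k + 1"
  defines "asol \<equiv> (\<lambda>n. n - h n)"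
  shows "(\<forall>k. (\<forall>j\<le>m. h ((asol ^^ j) (Tstar m (k+1) - 1)) = k)
              \<and> (asol ^^ m) (Tstar m (k+1) - 1) = Tstar m k)
       \<and> (\<forall>k\<ge>1. (\<forall>j. 1 \<le> j \<and> j \<le> m \<longrightarrow> h ((asol ^^ j) (Tstar m k)) = k - 1)
              \<and> (asol ^^ m) (Tstar m k) = Tstar m (k - 1))"
proof -
  define T where "T = Tstar m"
  have T1: "T k \<ge> 1" for k by (simp add: T_def Tstar_def)
  have TS: "T (Suc k) = T k + m * k + 1" for k by (simp add: T_def Tstar_Suc)
  have mono: "h n \<le> h n'" if "1 \<le> n" "n \<le> n'" for n n'
    using that(2,1)
  proof (induction n' rule: dec_induct)
    case base then show ?case by simp
  next
    case (step n') then show ?case using hmono[of n'] by simp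
  qed
  have L: "{n. 1 \<le> n \<and> h n < k} = {1..<T k}" for k
  proof (induction k)
    case 0 then show ?case by (auto simp: T_def Tstar_def)
  next
    case (Suc k)
    have IHm: "(1 \<le> x \<and> h x < k) \<longleftrightarrow> (1 \<le> x \<and> x < T k)" for x
    proof -
      have "x \<in> {n. 1 \<le> n \<and> h n < k} \<longleftrightarrow> x \<in> {1..<T k}" by (simp only: Suc.IH)
      then show ?thesis by simp
    qed
    define S where "S = {n. 1 \<le> n \<and> h n = k}"
    have cS: "card S = m * k + 1" using hcount S_def by simp
    have cpos: "card S > 0" using cS by simp
    then have fS: "finite S" and neS: "S \<noteq> {}" by (simp_all add: card_gt_0_iff)
    have geT: "n \<ge> T k" if "n \<in> S" for n
    proof (rule ccontr)
      assume "\<not> n \<ge> T k"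
      then show False using IHm[of n] that S_def by auto
    qed
    define M where "M = Max S"
    have MS: "M \<in> S" using fS neS M_def by simp
    have SI: "S = {T k..M}"
    proof
      show "S \<subseteq> {T k..M}" using geT M_def fS by auto
    next
      show "{T k..M} \<subseteq> S"
      proof
        fix n assume n: "n \<in> {T k..M}"
        then have n1: "n \<ge> 1" using T1[of k] by auto
        have "\<not> n < T k" using n by auto
        then have "h n \<ge> k" using IHm[of n] n1 by linarith
        moreover have "h n \<le> h M" using mono n n1 by auto
        ultimately show "n \<in> S" using MS S_def n1 by auto
      qed
    qed
    have cM: "card {T k..M} = m * k + 1" using SI cS by simp
    have "card {T k..M} = Suc M - T k" by (rule card_atLeastAtMost)
    then have Meq: "M = T k + m * k" using cM geT[OF MS] by linarith
    have Sm: "x \<in> S \<longleftrightarrow> T k \<le> x \<and> x < T (Suc k)" for x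
    proof -
      have "x \<in> S \<longleftrightarrow> x \<in> {T k..M}" by (simp only: SI)
      then show ?thesis using Meq TS[of k] by (simp add: less_Suc_eq_le)
    qed
    show ?case
    proof (rule set_eqI)
      fix x
      show "x \<in> {n. 1 \<le> n \<and> h n < Suc k} \<longleftrightarrow> x \<in> {1..<T (Suc k)}"
        using IHm[of x] Sm[of x] S_def T1[of k] TS[of k] by auto
    qed
  qed
  have Lm: "(1 \<le> x \<and> h x < j) \<longleftrightarrow> (1 \<le> x \<and> x < T j)" for x j
    proof -
      have "x \<in> {n. 1 \<le> n \<and> h n < j} \<longleftrightarrow> x \<in> {1..<T j}" by (simp only: L)
      then show ?thesis by simp
    qed
  have lev: "h n = k" if "T k \<le> n" "n < T (Suc k)" for n k
  proof -
    have n1: "n \<ge> 1" using T1[of k] that by linarith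
    have a: "h n < Suc k" using Lm[of n "Suc k"] that n1 by blast
    have "\<not> h n < k" using Lm[of n k] n1 that by linarith
    then show ?thesis using a by linarith
  qed
  have G: "\<forall>j\<le>i. (asol ^^ j) (T k + i * k) = T k + (i - j) * k \<and> h ((asol ^^ j) (T k + i * k)) = k"
    if "i \<le> m" for i k
  proof (intro allI impI)
    fix j assume "j \<le> i"
    then show "(asol ^^ j) (T k + i * k) = T k + (i - j) * k \<and> h ((asol ^^ j) (T k + i * k)) = k"
    proof (induction j)
      case 0
      have ik: "i * k \<le> m * k" using that by (rule mult_le_mono1)
      have "T k + i * k < T (Suc k)" using TS[of k] ik by linarith
      then have "h (T k + i * k) = k" by (intro lev) auto
      then show ?case by simp
    next
      case (Suc j)
      then have e: "(asol ^^ j) (T k + i * k) = T k + (i - j) * k" and hh: "h (T k + (i - j) * k) = k"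
        by auto
      have e2: "(asol ^^ Suc j) (T k + i * k) = T k + (i - Suc j) * k"
      proof -
        have ij: "i - j = Suc (i - Suc j)" using Suc.prems by simp
        have "(asol ^^ Suc j) (T k + i * k) = asol (T k + (i - j) * k)" using e by simp
        also have "\<dots> = T k + (i - j) * k - k" using hh by (simp add: asol_def)
        also have "\<dots> = T k + (i - Suc j) * k" by (simp only: ij mult_Suc)
        finally show ?thesis .
      qed
      have ik: "(i - Suc j) * k \<le> m * k" using that by (intro mult_le_mono1) auto
      have "T k + (i - Suc j) * k < T (Suc k)" using TS[of k] ik by linarith
      then have "h (T k + (i - Suc j) * k) = k" by (intro lev) auto
      then show ?case using e2 by simp
    qed
  qed
  have P1: "(\<forall>j\<le>m. h ((asol ^^ j) (T (k+1) - 1)) = k) \<and> (asol ^^ m) (T (k+1) - 1) = T k" for k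
  proof -
    have "T (k+1) - 1 = T k + m * k" using TS[of k] by simp
    then show ?thesis using G[of m k] by auto
  qed
  have P2: "(\<forall>j. 1 \<le> j \<and> j \<le> m \<longrightarrow> h ((asol ^^ j) (T k)) = k - 1) \<and> (asol ^^ m) (T k) = T (k - 1)"
    if k: "k \<ge> 1" for k
  proof -
    obtain k' where k': "k = Suc k'" using k by (metis One_nat_def Suc_le_D)
    have "T k < T (Suc k)" using TS[of k] by linarith
    then have hT: "h (T k) = k" by (intro lev) auto
    have mk: "m * k' = (m - 1) * k' + k'" using m by (cases m) auto
    have a1: "asol (T k) = T k' + (m - 1) * k'"
    proof -
      have "asol (T k) = T k - k" using hT by (simp add: asol_def)
      also have "\<dots> = T k' + (m - 1) * k'" using TS[of k'] k' mk by simp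
      finally show ?thesis .
    qed
    have it: "(asol ^^ j) (T k) = (asol ^^ (j - 1)) (T k' + (m - 1) * k')" if j1: "j \<ge> 1" for j
    proof -
      obtain j' where jj: "j = Suc j'" using j1 by (cases j) auto
      have "(asol ^^ j) (T k) = (asol ^^ j') (asol (T k))" unfolding jj funpow_Suc_right o_apply ..
      also have "\<dots> = (asol ^^ (j - 1)) (T k' + (m - 1) * k')" unfolding a1 jj diff_Suc_1 ..
      finally show ?thesis .
    qed
    have G': "(asol ^^ j) (T k' + (m - 1) * k') = T k' + (m - 1 - j) * k' \<and>
        h ((asol ^^ j) (T k' + (m - 1) * k')) = k'" if "j \<le> m - 1" for j
      using G[of "m - 1" k', OF diff_le_self] that by blast
    show ?thesis
    proof (intro conjI allI impI)
      fix j assume j: "1 \<le> j \<and> j \<le> m"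
      then have "j - 1 \<le> m - 1" by linarith
      then have "h ((asol ^^ (j - 1)) (T k' + (m - 1) * k')) = k'" using G' by blast
      moreover have "(asol ^^ j) (T k) = (asol ^^ (j - 1)) (T k' + (m - 1) * k')" using it j by blast
      ultimately show "h ((asol ^^ j) (T k)) = k - 1" using k' by simp
    next
      have "(asol ^^ (m - 1)) (T k' + (m - 1) * k') = T k'" using G'[of "m - 1"] by simp
      moreover have "(asol ^^ m) (T k) = (asol ^^ (m - 1)) (T k' + (m - 1) * k')" using it m by blast
      ultimately show "(asol ^^ m) (T k) = T (k - 1)" using k' by simp
    qed
  qed
  have A: "\<forall>k. (\<forall>j\<le>m. h ((asol ^^ j) (T (k+1) - 1)) = k) \<and> (asol ^^ m) (T (k+1) - 1) = T k"
    using P1 by blast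
  have B: "\<forall>k\<ge>1. (\<forall>j. 1 \<le> j \<and> j \<le> m \<longrightarrow> h ((asol ^^ j) (T k)) = k - 1)
              \<and> (asol ^^ m) (T k) = T (k - 1)"
    using P2 by blast
  show ?thesis using A B unfolding T_def by (rule conjI)
qed

end
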